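(* Let $K$ be a field with a non-trivial non-Archimedean valuation $|\cdot|$, let $X$ be a complete non-Archimedean normed space over $K$, and let $G$ be an additive (abelian) group. Fix $k\in\mathbb N$, and assume $|2k^4|\neq0$. For $f:G\to X$ define $$\Delta f(x,y)=f(kx+y)+f(kx-y)-k^2[f(x+y)+f(x-y)]-2k^2(k^2-1)f(x)+2(k^2-1)f(y)\qquad(x,y\in G).$$ Let $\psi:G\times G\to[0,\infty)$ be a function such that $$\lim_{n\to\infty}\frac{\psi(k^nx,k^ny)}{|k|^{4n}}=0\quad\text{for all }x,y\in G,$$ and such that for each $x\in G$ the limit $$\tilde\psi(x):=\lim_{n\to\infty}\max\Big\{\frac{\psi(k^jx,0)}{|k|^{4j}}:\ 0\le j<n\Big\}$$ exists. Suppose $f:G\to X$ satisfies $f(0)=0$ and $\|\Delta f(x,y)\|\le\psi(x,y)$ for all $x,y\in G$. Then there exists a quartic mapping $Q:G\to X$ (i.e. $\Delta Q(x,y)=0$ for all $x,y\in G$) such that $$\|Q(x)-f(x)\|\le\frac{1}{|2k^4|}\tilde\psi(x)\quad\text{for all }x\in G.$$ Moreover, if $$\lim_{i\to\infty}\lim_{n\to\infty}\max\Big\{\frac{\psi(k^jx,0)}{|k|^{4j}}:\ i\le j<n+i\Big\}=0\quad\text{for all }x\in G,$$ then $Q$ is the unique quartic mapping satisfying this inequality.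
   Context: A non-Archimedean field is a field $K$ with $|\cdot|:K\to[0,\infty)$ such that $|r|=0$ iff $r=0$, $|rs|=|r||s|$, $|r+s|\le\max\{|r|,|s|\}$. A non-Archimedean norm on a $K$-vector space $X$ satisfies $\|x\|=0$ iff $x=0$, $\|rx\|=|r|\|x\|$, $\|x+y\|\le\max\{\|x\|,\|y\|\}$; complete means every Cauchy sequence converges. Integers are regarded as elements of $K$ and $|k|$ is the valuation of $k$ in $K$. *)

theory Defs
  imports Complex_Main
begin

definition nonarch_valuation :: "('k::field \<Rightarrow> real) \<Rightarrow> bool" where
  "nonarch_valuation v \<longleftrightarrow>
     (\<forall>r. v r \<ge> 0) \<and> (\<forall>r. v r = 0 \<longleftrightarrow> r = 0) \<and>
     (\<forall>r s. v (r * s) = v r * v s) \<and> (\<forall>r s. v (r + s) \<le> max (v r) (v s))"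

definition nontrivial_valuation :: "('k::field \<Rightarrow> real) \<Rightarrow> bool" where
  "nontrivial_valuation v \<longleftrightarrow> (\<exists>r. v r \<noteq> 0 \<and> v r \<noteq> 1)"

definition complete_nonarch_normed_space ::
  "('k::field \<Rightarrow> real) \<Rightarrow> ('k \<Rightarrow> 'x::ab_group_add \<Rightarrow> 'x) \<Rightarrow> ('x \<Rightarrow> real) \<Rightarrow> bool" where
  "complete_nonarch_normed_space v smul nrm \<longleftrightarrow>
     (\<forall>a x y. smul a (x + y) = smul a x + smul a y) \<and>
     (\<forall>a b x. smul (a + b) x = smul a x + smul b x) \<and>
     (\<forall>a b x. smul (a * b) x = smul a (smul b x)) \<and>
     (\<forall>x. smul 1 x = x) \<and>
     (\<forall>x. nrm x \<ge> 0) \<and> (\<forall>x. nrm x = 0 \<longleftrightarrow> x = 0) \<and>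
     (\<forall>r x. nrm (smul r x) = v r * nrm x) \<and>
     (\<forall>x y. nrm (x + y) \<le> max (nrm x) (nrm y)) \<and>
     (\<forall>s :: nat \<Rightarrow> 'x. (\<forall>e>0. \<exists>N. \<forall>m\<ge>N. \<forall>n\<ge>N. nrm (s m - s n) < e) \<longrightarrow>
        (\<exists>l. (\<lambda>n. nrm (s n - l)) \<longlonglongrightarrow> 0))"

definition gmul :: "nat \<Rightarrow> 'g::ab_group_add \<Rightarrow> 'g" where
  "gmul n x = (\<Sum>i<n. x)"

definition quartic_delta ::
  "('k::field \<Rightarrow> 'x::ab_group_add \<Rightarrow> 'x) \<Rightarrow> nat \<Rightarrow> ('g::ab_group_add \<Rightarrow> 'x) \<Rightarrow> 'g \<Rightarrow> 'g \<Rightarrow> 'x" where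
  "quartic_delta smul k f x y =
     f (gmul k x + y) + f (gmul k x - y)
     - smul ((of_nat k)^2) (f (x + y) + f (x - y))
     - smul (2 * (of_nat k)^2 * ((of_nat k)^2 - 1)) (f x)
     + smul (2 * ((of_nat k)^2 - 1)) (f y)"

definition quartic_map ::
  "('k::field \<Rightarrow> 'x::ab_group_add \<Rightarrow> 'x) \<Rightarrow> nat \<Rightarrow> ('g::ab_group_add \<Rightarrow> 'x) \<Rightarrow> bool" where
  "quartic_map smul k Q \<longleftrightarrow> (\<forall>x y. quartic_delta smul k Q x y = 0)"

definition psi_max ::
  "('k::field \<Rightarrow> real) \<Rightarrow> nat \<Rightarrow> ('g::ab_group_add \<Rightarrow> 'g \<Rightarrow> real) \<Rightarrow> 'g \<Rightarrow> nat \<Rightarrow> nat \<Rightarrow> real" where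
  "psi_max v k psi x i n =
     Max ((\<lambda>j. psi (gmul (k ^ j) x) 0 / (v (of_nat k)) ^ (4 * j)) ` {i..<n + i})"

definition psi_tilde ::
  "('k::field \<Rightarrow> real) \<Rightarrow> nat \<Rightarrow> ('g::ab_group_add \<Rightarrow> 'g \<Rightarrow> real) \<Rightarrow> 'g \<Rightarrow> real" where
  "psi_tilde v k psi x = lim (\<lambda>n. psi_max v k psi x 0 n)"

end

theory Submission
  imports Defs
begin


lemma gmul_0[simp]: "gmul 0 x = 0" by (simp add: gmul_def)
lemma gmul_Suc: "gmul (Suc n) x = x + gmul n x" by (simp add: gmul_def)
lemma gmul_zero[simp]: "gmul n (0::'g::ab_group_add) = 0" by (induct n) (simp_all add: gmul_Suc)
lemma gmul_add: "gmul n (x + y) = gmul n x + gmul n (y::'g::ab_group_add)"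
  by (induct n) (simp_all add: gmul_Suc algebra_simps)
lemma gmul_neg: "gmul n (- x) = - gmul n (x::'g::ab_group_add)"
  by (induct n) (simp_all add: gmul_Suc algebra_simps)
lemma gmul_diff: "gmul n (x - y) = gmul n x - gmul n (y::'g::ab_group_add)"
  using gmul_add[of n x "-y"] gmul_neg[of n y] by simp
lemma gmul_addn: "gmul (m + n) x = gmul m x + gmul n (x::'g::ab_group_add)"
  by (induct m) (simp_all add: gmul_Suc algebra_simps)
lemma gmul_mult: "gmul (m * n) x = gmul m (gmul n (x::'g::ab_group_add))"
  by (induct m) (simp_all add: gmul_Suc gmul_addn)
lemma gmul_comm: "gmul m (gmul n x) = gmul n (gmul m (x::'g::ab_group_add))"
  by (metis gmul_mult mult.commute)

lemma tendsto_divide_const: "g \<longlonglongrightarrow> G \<Longrightarrow> (\<lambda>n. g n / (C::real)) \<longlonglongrightarrow> G / C"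
  unfolding divide_inverse by (rule tendsto_mult_right)

locale NA =
  fixes v :: "'k::field \<Rightarrow> real" and smul :: "'k \<Rightarrow> 'x::ab_group_add \<Rightarrow> 'x" and nrm :: "'x \<Rightarrow> real"
  assumes val: "nonarch_valuation v" and sp: "complete_nonarch_normed_space v smul nrm"
begin

lemma v_nonneg: "v r \<ge> 0" using val by (simp add: nonarch_valuation_def)
lemma v_zero_iff: "v r = 0 \<longleftrightarrow> r = 0" using val by (simp add: nonarch_valuation_def)
lemma v_mult: "v (r * s) = v r * v s" using val by (simp add: nonarch_valuation_def)
lemma v_one[simp]: "v 1 = 1"
proof -
  have "v 1 = v 1 * v 1" using v_mult[of 1 1] by simp
  moreover have "v 1 \<noteq> 0" using v_zero_iff by simp
  ultimately show ?thesis by simp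
qed
lemma v_inverse: "v (inverse a) = inverse (v a)"
proof (cases "a = 0")
  case True then show ?thesis using v_zero_iff[of 0] by simp
next
  case False
  have "v a * v (inverse a) = 1" using v_mult[of a "inverse a"] False by simp
  then show ?thesis by (metis inverse_unique)
qed
lemma v_power: "v (a ^ n) = v a ^ n" by (induct n) (simp_all add: v_mult)
lemma v_minus: "v (- a) = v a"
proof -
  have "v (-1) * v (-1) = 1" using v_mult[of "-1" "-1"] by simp
  then have "v (-1) = 1" using v_nonneg[of "-1"]
    by (metis abs_of_nonneg abs_mult_self_eq real_sqrt_abs real_sqrt_one power2_eq_square)
  then show ?thesis using v_mult[of "-1" a] by simp
qed

lemma smul_add_r: "smul a (x + y) = smul a x + smul a y" using sp by (simp add: complete_nonarch_normed_space_def)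
lemma smul_add_l: "smul (a + b) x = smul a x + smul b x" using sp by (simp add: complete_nonarch_normed_space_def)
lemma smul_assoc: "smul (a * b) x = smul a (smul b x)" using sp by (simp add: complete_nonarch_normed_space_def)
lemma smul_one[simp]: "smul 1 x = x" using sp by (simp add: complete_nonarch_normed_space_def)
lemma nrm_nonneg: "nrm x \<ge> 0" using sp by (simp add: complete_nonarch_normed_space_def)
lemma nrm_zero_iff: "nrm x = 0 \<longleftrightarrow> x = 0" using sp by (simp add: complete_nonarch_normed_space_def)
lemma nrm_smul: "nrm (smul r x) = v r * nrm x" using sp by (simp add: complete_nonarch_normed_space_def)
lemma nrm_ultra: "nrm (x + y) \<le> max (nrm x) (nrm y)" using sp by (simp add: complete_nonarch_normed_space_def)
lemma complete: "(\<forall>e>0. \<exists>N. \<forall>m\<ge>N. \<forall>n\<ge>N. nrm (s m - s n) < e) \<Longrightarrow> \<exists>l. (\<lambda>n. nrm (s n - l)) \<longlonglongrightarrow> 0"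
  using sp unfolding complete_nonarch_normed_space_def by blast

lemma nrm_0[simp]: "nrm 0 = 0" using nrm_zero_iff by simp
lemma smul_zero_r[simp]: "smul a 0 = 0" using smul_add_r[of a 0 0] by simp
lemma smul_zero_l[simp]: "smul 0 x = 0" using smul_add_l[of 0 0 x] by simp
lemma smul_neg_r: "smul a (- x) = - smul a x"
  using smul_add_r[of a x "-x"] by (simp add: eq_neg_iff_add_eq_0 add.commute)
lemma smul_diff_r: "smul a (x - y) = smul a x - smul a y"
  using smul_add_r[of a x "-y"] smul_neg_r by simp
lemma smul_neg_l: "smul (- a) x = - smul a x"
  using smul_add_l[of a "-a" x] by (simp add: eq_neg_iff_add_eq_0 add.commute)
lemma smul_diff_l: "smul (a - b) x = smul a x - smul b x"
  using smul_add_l[of a "-b" x] smul_neg_l by simp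
lemma smul_comm: "smul a (smul b x) = smul b (smul a x)"
  by (metis smul_assoc mult.commute)
lemma smul_inv: "a \<noteq> 0 \<Longrightarrow> smul (inverse a) (smul a x) = x"
  by (metis smul_assoc smul_one left_inverse)
lemma smul_two: "smul 2 x = x + x" using smul_add_l[of 1 1 x] by (simp add: one_add_one)
lemma nrm_neg: "nrm (- x) = nrm x"
  using nrm_smul[of "-1" x] smul_neg_l[of 1 x] v_minus[of 1] by simp
lemma nrm_sym: "nrm (x - y) = nrm (y - x)" using nrm_neg[of "x - y"] by simp
lemma nrm_tri: "nrm (x + y) \<le> nrm x + nrm y"
  using nrm_ultra[of x y] nrm_nonneg[of x] nrm_nonneg[of y] by linarith
lemma nrm_diff_le: "nrm (x - z) \<le> max (nrm (x - y)) (nrm (y - z))"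
  using nrm_ultra[of "x - y" "y - z"] by simp


definition conv :: "(nat \<Rightarrow> 'x) \<Rightarrow> 'x \<Rightarrow> bool" where
  "conv s l \<longleftrightarrow> (\<lambda>n. nrm (s n - l)) \<longlonglongrightarrow> 0"

lemma sq0: "(\<And>n. 0 \<le> a n) \<Longrightarrow> (\<And>n. a n \<le> b n) \<Longrightarrow> b \<longlonglongrightarrow> 0 \<Longrightarrow> (a::nat\<Rightarrow>real) \<longlonglongrightarrow> 0"
  by (rule tendsto_sandwich[of "\<lambda>_. 0" a sequentially b]) auto

lemma conv_add: "conv s l \<Longrightarrow> conv t m \<Longrightarrow> conv (\<lambda>n. s n + t n) (l + m)"
  unfolding conv_def
proof -
  assume a: "(\<lambda>n. nrm (s n - l)) \<longlonglongrightarrow> 0" "(\<lambda>n. nrm (t n - m)) \<longlonglongrightarrow> 0"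
  show "(\<lambda>n. nrm (s n + t n - (l + m))) \<longlonglongrightarrow> 0"
  proof (rule sq0[OF nrm_nonneg])
    fix n show "nrm (s n + t n - (l + m)) \<le> nrm (s n - l) + nrm (t n - m)"
      using nrm_tri[of "s n - l" "t n - m"] by (simp add: algebra_simps)
  next
    show "(\<lambda>n. nrm (s n - l) + nrm (t n - m)) \<longlonglongrightarrow> 0" using tendsto_add[OF a] by simp
  qed
qed

lemma conv_smul: "conv s l \<Longrightarrow> conv (\<lambda>n. smul c (s n)) (smul c l)"
  unfolding conv_def
proof -
  assume a: "(\<lambda>n. nrm (s n - l)) \<longlonglongrightarrow> 0"
  have "(\<lambda>n. v c * nrm (s n - l)) \<longlonglongrightarrow> v c * 0" by (rule tendsto_mult[OF tendsto_const a])
  then show "(\<lambda>n. nrm (smul c (s n) - smul c l)) \<longlonglongrightarrow> 0"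
    by (simp add: smul_diff_r[symmetric] nrm_smul)
qed

lemma conv_neg: "conv s l \<Longrightarrow> conv (\<lambda>n. - s n) (- l)"
proof -
  have "nrm (- s n - - l) = nrm (s n - l)" for n using nrm_neg[of "s n - l"] by (simp add: algebra_simps)
  then show "conv s l \<Longrightarrow> conv (\<lambda>n. - s n) (- l)" unfolding conv_def by simp
qed

lemma conv_diff: "conv s l \<Longrightarrow> conv t m \<Longrightarrow> conv (\<lambda>n. s n - t n) (l - m)"
  using conv_add[of s l "\<lambda>n. - t n" "- m"] conv_neg[of t m] by simp

lemma conv_le:
  assumes "conv s l" "g \<longlonglongrightarrow> G" "\<And>n. n \<ge> N \<Longrightarrow> nrm (s n - b) \<le> g n"
  shows "nrm (l - b) \<le> G"
proof -
  have "(\<lambda>n. nrm (s n - l) + g n) \<longlonglongrightarrow> 0 + G"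
    using tendsto_add assms(1,2) unfolding conv_def by blast
  moreover have "\<forall>n\<ge>N. nrm (l - b) \<le> nrm (s n - l) + g n"
  proof (intro allI impI)
    fix n assume "n \<ge> N"
    have "nrm (l - b) \<le> max (nrm (l - s n)) (nrm (s n - b))" by (rule nrm_diff_le)
    also have "\<dots> \<le> nrm (s n - l) + g n"
      using assms(3)[OF \<open>n \<ge> N\<close>] nrm_sym[of l "s n"] nrm_nonneg[of "s n - l"] nrm_nonneg[of "s n - b"] by simp
    finally show "nrm (l - b) \<le> nrm (s n - l) + g n" .
  qed
  ultimately have "nrm (l - b) \<le> 0 + G" by (intro LIMSEQ_le_const) auto
  then show ?thesis by simp
qed

lemma telescope:
  assumes "0 \<le> M" "\<And>j. n \<le> j \<Longrightarrow> j < m \<Longrightarrow> nrm (s (Suc j) - s j) \<le> M" "n \<le> m"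
  shows "nrm (s m - s n) \<le> M"
  using assms(2,3)
proof (induction m)
  case 0 then show ?case using assms(1) by simp
next
  case (Suc m)
  show ?case
  proof (cases "n = Suc m")
    case True then show ?thesis using assms(1) by simp
  next
    case False
    then have "n \<le> m" using Suc.prems by simp
    then have "nrm (s m - s n) \<le> M" using Suc by simp
    moreover have "nrm (s (Suc m) - s m) \<le> M" using Suc.prems \<open>n \<le> m\<close> by simp
    ultimately show ?thesis using nrm_diff_le[of "s (Suc m)" "s n" "s m"] by simp
  qed
qed

lemma cauchy_conv:
  assumes "(\<lambda>j. nrm (s (Suc j) - s j)) \<longlonglongrightarrow> 0"
  shows "\<exists>l. conv s l"
  unfolding conv_def
proof (rule complete, intro allI impI)
  fix e :: real assume "e > 0"
  then obtain N where N: "\<And>j. j \<ge> N \<Longrightarrow> nrm (s (Suc j) - s j) < e / 2"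
    using LIMSEQ_D[OF assms, of "e/2"] nrm_nonneg by fastforce
  have *: "nrm (s m - s n) \<le> e / 2" if "N \<le> n" "n \<le> m" for m n
  proof (rule telescope)
    show "0 \<le> e / 2" using \<open>e > 0\<close> by simp
    show "n \<le> m" by fact
    fix j assume "n \<le> j" "j < m"
    then show "nrm (s (Suc j) - s j) \<le> e / 2" using N[of j] that by simp
  qed
  show "\<exists>N. \<forall>m\<ge>N. \<forall>n\<ge>N. nrm (s m - s n) < e"
  proof (intro exI allI impI)
    fix m n assume "N \<le> m" "N \<le> n"
    then have "nrm (s m - s n) \<le> e / 2"
      using *[of n m] *[of m n] nrm_sym[of "s m" "s n"] by (cases "n \<le> m") auto
    then show "nrm (s m - s n) < e" using \<open>e > 0\<close> by simp
  qed
qed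


lemma delta_y0:
  "quartic_delta smul k g x 0 =
     smul 2 (g (gmul k x) - smul ((of_nat k)^4) (g x)) + smul (2*((of_nat k)^2-1)) (g 0)"
proof -
  define c :: 'k where "c = of_nat k"
  have e1: "(2::'k) * c^4 = c^2 + c^2 + 2*c^2*(c^2-1)" by (simp add: algebra_simps power2_eq_square power4_eq_xxxx)
  have A: "smul (2 * c^4) (g x) = smul (c^2) (g x) + smul (c^2) (g x) + smul (2*c^2*(c^2-1)) (g x)"
    unfolding e1 by (simp only: smul_add_l)
  have B: "smul 2 (smul (c^4) (g x)) = smul (2*c^4) (g x)" by (simp add: smul_assoc)
  have C: "smul (c^2) (g x + g x) = smul (c^2) (g x) + smul (c^2) (g x)" by (rule smul_add_r)
  have e2: "smul 2 (smul (c^4) (g x)) = smul (c^2) (g x + g x) + smul (2*c^2*(c^2-1)) (g x)"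
    by (simp only: A B C)
  have "quartic_delta smul k g x 0 = g (gmul k x) + g (gmul k x) - smul (c^2) (g x + g x)
     - smul (2*c^2*(c^2-1)) (g x) + smul (2*(c^2-1)) (g 0)"
    unfolding quartic_delta_def c_def by simp
  also have "\<dots> = smul 2 (g (gmul k x)) - smul 2 (smul (c^4) (g x)) + smul (2*(c^2-1)) (g 0)"
    by (simp only: e2 smul_two[of "g (gmul k x)"]) (simp add: algebra_simps)
  finally show ?thesis unfolding c_def by (simp add: smul_diff_r)
qed

lemma delta_smul: "quartic_delta smul k (\<lambda>z. smul r (g z)) x y = smul r (quartic_delta smul k g x y)"
  unfolding quartic_delta_def
  by (simp add: smul_add_r smul_diff_r smul_comm[of r])

lemma delta_gmul: "quartic_delta smul k (\<lambda>z. g (gmul m z)) x y = quartic_delta smul k g (gmul m x) (gmul m y)"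
  unfolding quartic_delta_def by (simp add: gmul_add gmul_diff gmul_comm[of m k])

lemma quartic_scale:
  assumes q: "quartic_map smul k Q" and c0: "(of_nat k :: 'k) \<noteq> 0" and t0: "(2::'k) \<noteq> 0"
  shows "Q (gmul k x) = smul ((of_nat k)^4) (Q x)"
proof -
  define c :: 'k where "c = of_nat k"
  have d0: "smul 2 (Q 0 - smul (c^4) (Q 0)) + smul (2*(c^2-1)) (Q 0) = 0"
    using q delta_y0[of k Q 0] unfolding quartic_map_def c_def by simp
  have ee: "smul 2 (Q 0 - smul (c^4) (Q 0)) = smul (2 - 2*c^4) (Q 0)"
    by (simp add: smul_diff_r smul_diff_l smul_assoc)
  have "smul (2 - 2*c^4 + 2*(c^2-1)) (Q 0) = smul (2 - 2*c^4) (Q 0) + smul (2*(c^2-1)) (Q 0)"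
    by (rule smul_add_l)
  also have "\<dots> = 0" using d0 ee by simp
  finally have "smul (2 - 2*c^4 + 2*(c^2-1)) (Q 0) = 0" .
  moreover have "(2 - 2*c^4 + 2*(c^2-1)) = (- (c^2)) * (2*(c^2-1))"
    by (simp add: algebra_simps power2_eq_square power4_eq_xxxx)
  ultimately have "smul ((- (c^2)) * (2*(c^2-1))) (Q 0) = 0" by metis
  then have "smul (- (c^2)) (smul (2*(c^2-1)) (Q 0)) = 0" by (simp only: smul_assoc)
  moreover have "- (c^2) \<noteq> 0" using c0 unfolding c_def by simp
  ultimately have z: "smul (2*(c^2-1)) (Q 0) = 0" by (metis smul_inv smul_zero_r)
  have "smul 2 (Q (gmul k x) - smul (c^4) (Q x)) = 0"
    using q delta_y0[of k Q x] z unfolding quartic_map_def c_def by simp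
  then have "Q (gmul k x) - smul (c^4) (Q x) = 0" using t0 by (metis smul_inv smul_zero_r)
  then show ?thesis unfolding c_def by simp
qed

lemma quartic_scale_pow:
  assumes q: "quartic_map smul k Q" and c0: "(of_nat k :: 'k) \<noteq> 0" and t0: "(2::'k) \<noteq> 0"
  shows "Q (gmul (k^n) x) = smul (((of_nat k)^4)^n) (Q x)"
proof (induction n)
  case 0 then show ?case by (simp add: gmul_Suc)
next
  case (Suc n)
  have "Q (gmul (k^Suc n) x) = Q (gmul k (gmul (k^n) x))" by (simp add: gmul_mult)
  also have "\<dots> = smul ((of_nat k)^4) (Q (gmul (k^n) x))" by (rule quartic_scale[OF q c0 t0])
  also have "\<dots> = smul (((of_nat k)^4)^Suc n) (Q x)" using Suc by (simp add: smul_assoc)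
  finally show ?case .
qed

end

locale QS = NA v smul nrm
  for v :: "'k::field \<Rightarrow> real" and smul :: "'k \<Rightarrow> 'x::ab_group_add \<Rightarrow> 'x" and nrm :: "'x \<Rightarrow> real" +
  fixes k :: nat and psi :: "'g::ab_group_add \<Rightarrow> 'g \<Rightarrow> real" and f :: "'g \<Rightarrow> 'x"
  assumes nz: "v (2 * (of_nat k) ^ 4) \<noteq> 0"
    and psi_nn: "\<forall>x y. psi x y \<ge> 0"
    and psi_lim: "\<forall>x y. (\<lambda>n. psi (gmul (k ^ n) x) (gmul (k ^ n) y) / (v (of_nat k)) ^ (4 * n)) \<longlonglongrightarrow> 0"
    and psi_cv: "\<forall>x. convergent (\<lambda>n. psi_max v k psi x 0 n)"
    and f0: "f 0 = 0"
    and fb: "\<forall>x y. nrm (quartic_delta smul k f x y) \<le> psi x y"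
begin

lemma c0: "(of_nat k :: 'k) \<noteq> 0" using nz v_zero_iff by force
lemma t0: "(2::'k) \<noteq> 0" using nz v_zero_iff by force
lemma vc_pos: "v (of_nat k) > 0" using c0 v_zero_iff v_nonneg by (metis less_eq_real_def)
lemma v2_pos: "v 2 > 0" using t0 v_zero_iff v_nonneg by (metis less_eq_real_def)
lemma V_eq: "v (2 * (of_nat k)^4) = v 2 * v (of_nat k) ^ 4" by (simp add: v_mult v_power)
lemma V_pos: "v (2 * (of_nat k)^4) > 0" using V_eq v2_pos vc_pos by simp

lemma vr: "v (inverse ((of_nat k :: 'k)^4) ^ n) = 1 / v (of_nat k) ^ (4*n)"
  by (simp add: v_power v_inverse power_mult power_inverse divide_inverse)

definition a :: "nat \<Rightarrow> 'g \<Rightarrow> 'x" where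
  "a n x = smul (inverse ((of_nat k)^4) ^ n) (f (gmul (k^n) x))"

lemma D_bound: "v 2 * nrm (f (gmul k x) - smul ((of_nat k)^4) (f x)) \<le> psi x 0"
proof -
  have "nrm (smul 2 (f (gmul k x) - smul ((of_nat k)^4) (f x))) \<le> psi x 0"
    using fb[rule_format, of x 0] delta_y0[of k f x] f0 by simp
  then show ?thesis by (simp add: nrm_smul)
qed

lemma a_step: "a (Suc n) x - a n x = smul (inverse ((of_nat k)^4) ^ Suc n)
   (f (gmul k (gmul (k^n) x)) - smul ((of_nat k)^4) (f (gmul (k^n) x)))"
proof -
  have g: "gmul (k ^ Suc n) x = gmul k (gmul (k^n) x)" by (simp add: gmul_mult)
  have "inverse ((of_nat k :: 'k)^4) ^ Suc n * (of_nat k)^4 = inverse ((of_nat k)^4) ^ n * (inverse ((of_nat k)^4) * (of_nat k)^4)"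
    by (simp only: power_Suc mult_ac)
  also have "\<dots> = inverse ((of_nat k)^4) ^ n" using c0 by simp
  finally have ee: "inverse ((of_nat k :: 'k)^4) ^ Suc n * (of_nat k)^4 = inverse ((of_nat k)^4) ^ n" .
  have "smul (inverse ((of_nat k :: 'k)^4) ^ Suc n) (smul ((of_nat k)^4) (f (gmul (k^n) x)))
     = smul (inverse ((of_nat k)^4) ^ n) (f (gmul (k^n) x))" by (simp only: smul_assoc[symmetric] ee)
  then show ?thesis unfolding a_def g smul_diff_r by simp
qed

lemma a_step_bound: "nrm (a (Suc n) x - a n x) \<le>
   psi (gmul (k^n) x) 0 / v (of_nat k) ^ (4*n) / v (2 * (of_nat k)^4)"
proof -
  have "nrm (a (Suc n) x - a n x) = 1 / v (of_nat k) ^ (4 * Suc n) *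
     nrm (f (gmul k (gmul (k^n) x)) - smul ((of_nat k)^4) (f (gmul (k^n) x)))"
    unfolding a_step nrm_smul vr ..
  also have "\<dots> \<le> 1 / v (of_nat k) ^ (4 * Suc n) * (psi (gmul (k^n) x) 0 / v 2)"
    using D_bound[of "gmul (k^n) x"] v2_pos vc_pos
    by (intro mult_left_mono) (simp_all add: field_simps)
  also have "\<dots> = psi (gmul (k^n) x) 0 / v (of_nat k) ^ (4*n) / v (2 * (of_nat k)^4)"
    unfolding V_eq using vc_pos v2_pos by (simp add: field_simps power_add)
  finally show ?thesis .
qed

lemma dpsi_lim: "(\<lambda>n. psi (gmul (k^n) x) 0 / v (of_nat k) ^ (4*n) / v (2 * (of_nat k)^4)) \<longlonglongrightarrow> 0"
proof -
  have "(\<lambda>n. psi (gmul (k^n) x) 0 / v (of_nat k) ^ (4*n)) \<longlonglongrightarrow> 0"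
    using psi_lim[rule_format, of x 0] by simp
  from tendsto_divide_const[OF this, of "v (2 * (of_nat k)^4)"] show ?thesis by simp
qed

lemma a_conv: "\<exists>l. conv (\<lambda>n. a n x) l"
proof (rule cauchy_conv)
  show "(\<lambda>j. nrm (a (Suc j) x - a j x)) \<longlonglongrightarrow> 0"
    by (rule sq0[OF nrm_nonneg a_step_bound dpsi_lim])
qed

definition Q :: "'g \<Rightarrow> 'x" where "Q x = (SOME l. conv (\<lambda>n. a n x) l)"

lemma QC: "conv (\<lambda>n. a n x) (Q x)"
  unfolding Q_def using a_conv[of x] by (rule someI_ex)

lemma a0: "a 0 x = f x" by (simp add: a_def gmul_Suc)

lemma pm_nonneg: "1 \<le> n \<Longrightarrow> 0 \<le> psi_max v k psi x 0 n"
proof -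
  assume "1 \<le> n"
  define hh where "hh j = psi (gmul (k ^ j) x) 0 / v (of_nat k) ^ (4 * j)" for j
  have "0 \<le> hh 0" unfolding hh_def using psi_nn by simp
  also have "\<dots> \<le> psi_max v k psi x 0 n" unfolding psi_max_def hh_def[symmetric]
  proof (rule Max_ge)
    show "finite (hh ` {0..<n + 0})" by simp
    have "0 \<in> {0..<n+0}" using \<open>1 \<le> n\<close> by simp
    then show "hh 0 \<in> hh ` {0..<n + 0}" by (rule imageI)
  qed
  finally show ?thesis .
qed

lemma bound_n: "1 \<le> n \<Longrightarrow> nrm (a n x - f x) \<le> psi_max v k psi x 0 n / v (2 * (of_nat k)^4)"
proof -
  assume n1: "1 \<le> n"
  have "nrm (a n x - a 0 x) \<le> psi_max v k psi x 0 n / v (2 * (of_nat k)^4)"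
  proof (rule telescope)
    show "0 \<le> psi_max v k psi x 0 n / v (2 * (of_nat k)^4)" using pm_nonneg[OF n1] V_pos by simp
    show "0 \<le> n" by simp
    fix j assume "0 \<le> j" "j < n"
    have "psi (gmul (k^j) x) 0 / v (of_nat k) ^ (4*j) \<le> psi_max v k psi x 0 n"
      unfolding psi_max_def using \<open>j < n\<close> by (intro Max_ge) auto
    then have "psi (gmul (k^j) x) 0 / v (of_nat k) ^ (4*j) / v (2 * (of_nat k)^4)
       \<le> psi_max v k psi x 0 n / v (2 * (of_nat k)^4)"
      using V_pos by (intro divide_right_mono) simp_all
    then show "nrm (a (Suc j) x - a j x) \<le> psi_max v k psi x 0 n / v (2 * (of_nat k)^4)"
      using a_step_bound[of j x] by linarith
  qed
  then show ?thesis using a0 by simp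
qed

lemma Q_bound: "nrm (Q x - f x) \<le> psi_tilde v k psi x / v (2 * (of_nat k)^4)"
proof (rule conv_le[OF QC])
  have "(\<lambda>n. psi_max v k psi x 0 n) \<longlonglongrightarrow> psi_tilde v k psi x"
    using psi_cv unfolding psi_tilde_def by (simp add: convergent_LIMSEQ_iff)
  then show "(\<lambda>n. psi_max v k psi x 0 n / v (2 * (of_nat k)^4)) \<longlonglongrightarrow> psi_tilde v k psi x / v (2 * (of_nat k)^4)"
    by (rule tendsto_divide_const)
  fix n :: nat assume "n \<ge> 1"
  then show "nrm (a n x - f x) \<le> psi_max v k psi x 0 n / v (2 * (of_nat k)^4)" by (rule bound_n)
qed

lemma delta_a: "quartic_delta smul k (a n) x y =
  smul (inverse ((of_nat k)^4) ^ n) (quartic_delta smul k f (gmul (k^n) x) (gmul (k^n) y))"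
proof -
  have "a n = (\<lambda>z. smul (inverse ((of_nat k)^4) ^ n) ((\<lambda>z. f (gmul (k^n) z)) z))"
    by (rule ext) (simp add: a_def)
  then show ?thesis by (simp only: delta_smul delta_gmul)
qed

lemma Q_quartic: "quartic_map smul k Q"
  unfolding quartic_map_def
proof (intro allI)
  fix x y
  have cv: "conv (\<lambda>n. quartic_delta smul k (a n) x y) (quartic_delta smul k Q x y)"
    unfolding quartic_delta_def by (intro conv_add conv_diff conv_smul QC)
  have "nrm (quartic_delta smul k Q x y - 0) \<le> 0"
  proof (rule conv_le[OF cv])
    show "(\<lambda>n. psi (gmul (k ^ n) x) (gmul (k ^ n) y) / (v (of_nat k)) ^ (4 * n)) \<longlonglongrightarrow> 0"
      using psi_lim by simp
    fix n :: nat assume "n \<ge> 0"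
    show "nrm (quartic_delta smul k (a n) x y - 0) \<le> psi (gmul (k ^ n) x) (gmul (k ^ n) y) / (v (of_nat k)) ^ (4 * n)"
      unfolding delta_a using fb vc_pos by (simp add: nrm_smul vr divide_right_mono)
  qed
  then show "quartic_delta smul k Q x y = 0" using nrm_nonneg nrm_zero_iff by (metis diff_zero order_antisym)
qed

lemma psi_shift:
  assumes "1 \<le> m"
  shows "psi_max v k psi (gmul (k^n) x) 0 m / v (of_nat k) ^ (4*n) = psi_max v k psi x n m"
proof -
  define C where "C = v (of_nat k) ^ (4*n)"
  have Cp: "C > 0" unfolding C_def using vc_pos by simp
  define h where "h j = psi (gmul (k ^ j) (gmul (k^n) x)) 0 / v (of_nat k) ^ (4 * j)" for j
  define h' where "h' j = psi (gmul (k ^ j) x) 0 / v (of_nat k) ^ (4 * j)" for j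
  have mono: "mono (\<lambda>t::real. t / C)" using Cp by (auto simp: mono_def divide_right_mono)
  have "psi_max v k psi (gmul (k^n) x) 0 m / C = Max (h ` {0..<m}) / C"
    unfolding psi_max_def h_def by simp
  also have "\<dots> = Max ((\<lambda>t. t / C) ` h ` {0..<m})"
    using assms by (intro mono_Max_commute[OF mono]) auto
  also have "(\<lambda>t. t / C) ` h ` {0..<m} = h' ` ((\<lambda>j. j + n) ` {0..<m})"
    unfolding image_image
  proof (rule image_cong[OF refl])
    fix j
    have "gmul (k ^ j) (gmul (k^n) x) = gmul (k ^ (j + n)) x" by (simp add: gmul_mult power_add)
    then show "h j / C = h' (j + n)" unfolding h_def h'_def C_def
      by (simp add: power_add distrib_left)
  qed
  also have "\<dots> = h' ` {n..<m + n}" by simp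
  finally show ?thesis unfolding C_def psi_max_def h'_def by simp
qed

lemma lim_shift: "lim (\<lambda>m. psi_max v k psi x n m) = psi_tilde v k psi (gmul (k^n) x) / v (of_nat k) ^ (4*n)"
proof (rule limI)
  have "(\<lambda>m. psi_max v k psi (gmul (k^n) x) 0 m) \<longlonglongrightarrow> psi_tilde v k psi (gmul (k^n) x)"
    using psi_cv unfolding psi_tilde_def by (simp add: convergent_LIMSEQ_iff)
  then have "(\<lambda>m. psi_max v k psi (gmul (k^n) x) 0 m / v (of_nat k) ^ (4*n)) \<longlonglongrightarrow>
      psi_tilde v k psi (gmul (k^n) x) / v (of_nat k) ^ (4*n)"
    by (rule tendsto_divide_const)
  then show "(\<lambda>m. psi_max v k psi x n m) \<longlonglongrightarrow> psi_tilde v k psi (gmul (k^n) x) / v (of_nat k) ^ (4*n)"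
    by (rule Lim_transform_eventually) (auto simp: eventually_at_top_linorder psi_shift intro!: exI[of _ 1])
qed

lemma unique:
  assumes H: "\<forall>x. (\<lambda>i. lim (\<lambda>n. psi_max v k psi x i n)) \<longlonglongrightarrow> 0"
    and q: "quartic_map smul k Q'"
    and b: "\<forall>x. nrm (Q' x - f x) \<le> psi_tilde v k psi x / v (2 * (of_nat k) ^ 4)"
  shows "Q' = Q"
proof (rule ext)
  fix x :: 'g
  have sc: "R x = smul (inverse ((of_nat k)^4) ^ n) (R (gmul (k^n) x))" if "quartic_map smul k R" for R n
  proof -
    have "R (gmul (k^n) x) = smul (((of_nat k)^4)^n) (R x)" by (rule quartic_scale_pow[OF that c0 t0])
    moreover have "((of_nat k :: 'k)^4)^n \<noteq> 0" using c0 by simp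
    moreover have "inverse ((of_nat k :: 'k)^4) ^ n = inverse (((of_nat k)^4)^n)" by (rule power_inverse)
    ultimately show ?thesis by (metis smul_inv)
  qed
  have le: "nrm (Q' x - Q x) \<le> lim (\<lambda>m. psi_max v k psi x n m) / v (2 * (of_nat k) ^ 4)" for n
  proof -
    define z where "z = gmul (k^n) x"
    have "nrm (Q' x - Q x) = nrm (smul (inverse ((of_nat k)^4) ^ n) (Q' z - Q z))"
      unfolding z_def smul_diff_r using sc[OF q, of n] sc[OF Q_quartic, of n] by simp
    also have "\<dots> = 1 / v (of_nat k) ^ (4*n) * nrm (Q' z - Q z)" by (simp add: nrm_smul vr)
    also have "\<dots> \<le> 1 / v (of_nat k) ^ (4*n) * (psi_tilde v k psi z / v (2 * (of_nat k) ^ 4))"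
    proof (rule mult_left_mono)
      have "nrm (Q' z - Q z) \<le> max (nrm (Q' z - f z)) (nrm (f z - Q z))" by (rule nrm_diff_le)
      then show "nrm (Q' z - Q z) \<le> psi_tilde v k psi z / v (2 * (of_nat k) ^ 4)"
        using b[rule_format, of z] Q_bound[of z] nrm_sym[of "f z" "Q z"] by simp
      show "0 \<le> 1 / v (of_nat k) ^ (4*n)" using vc_pos by simp
    qed
    also have "\<dots> = lim (\<lambda>m. psi_max v k psi x n m) / v (2 * (of_nat k) ^ 4)"
      unfolding lim_shift z_def by simp
    finally show ?thesis .
  qed
  have "(\<lambda>n. lim (\<lambda>m. psi_max v k psi x n m) / v (2 * (of_nat k) ^ 4)) \<longlonglongrightarrow> 0 / v (2 * (of_nat k) ^ 4)"
    using H by (intro tendsto_divide_const) simp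
  then have "nrm (Q' x - Q x) \<le> 0" using le by (intro LIMSEQ_le_const) auto
  then show "Q' x = Q x" using nrm_nonneg nrm_zero_iff by (metis eq_iff_diff_eq_0 order_antisym)
qed

end


theorem theorem3p1:
  fixes v :: "'k::field \<Rightarrow> real"
    and smul :: "'k \<Rightarrow> 'x::ab_group_add \<Rightarrow> 'x"
    and nrm :: "'x \<Rightarrow> real"
    and k :: nat
    and psi :: "'g::ab_group_add \<Rightarrow> 'g \<Rightarrow> real"
    and f :: "'g \<Rightarrow> 'x"
  assumes "nonarch_valuation v"
    and "nontrivial_valuation v"
    and "complete_nonarch_normed_space v smul nrm"
    and "v (2 * (of_nat k) ^ 4) \<noteq> 0"
    and "\<forall>x y. psi x y \<ge> 0"
    and "\<forall>x y. (\<lambda>n. psi (gmul (k ^ n) x) (gmul (k ^ n) y) / (v (of_nat k)) ^ (4 * n)) \<longlonglongrightarrow> 0"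
    and "\<forall>x. convergent (\<lambda>n. psi_max v k psi x 0 n)"
    and "f 0 = 0"
    and "\<forall>x y. nrm (quartic_delta smul k f x y) \<le> psi x y"
  shows "\<exists>Q. quartic_map smul k Q
           \<and> (\<forall>x. nrm (Q x - f x) \<le> psi_tilde v k psi x / v (2 * (of_nat k) ^ 4))
           \<and> ((\<forall>x. (\<lambda>i. lim (\<lambda>n. psi_max v k psi x i n)) \<longlonglongrightarrow> 0) \<longrightarrow>
                (\<forall>Q'. quartic_map smul k Q'
                   \<and> (\<forall>x. nrm (Q' x - f x) \<le> psi_tilde v k psi x / v (2 * (of_nat k) ^ 4))
                   \<longrightarrow> Q' = Q))"
  proof -
  interpret QS v smul nrm k psi f
    using assms by unfold_locales (simp_all add: NA_def)
  show ?thesis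
    by (intro exI[of _ Q] conjI impI allI Q_quartic Q_bound unique) auto
qed

end
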